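(* Let $\mathbf u$ be an aperiodic infinite word over a finite alphabet whose language is closed under reversal. Then the following are equivalent: (1) there exists $H\in\mathbb N$ such that for every prefix $w$ of $\mathbf u$ with $|w|\ge H$, the longest palindromic suffix of $w$ occurs in $w$ exactly once; (2) there exists $N\in\mathbb N$ such that for every factor $w$ of $\mathbf u$ with $|w|\ge N$, every factor $v$ of $\mathbf u$ with $|v|>|w|$ which begins with $w$ or $\overline w$, ends with $w$ or $\overline w$, and contains no other occurrences of $w$ or $\overline w$ (i.e. $w,\overline w$ occur in $v$ only as its prefix and as its suffix), is a palindrome.
   Context: An infinite word is aperiodic if it is not eventually periodic. For a finite word $w=w_0\cdots w_{n-1}$ its reversal is $\overline{w}=w_{n-1}\cdots w_0$; $w$ is a palindrome if $w=\overline{w}$ (the empty word is a palindrome). The language of $\mathbf u$ is closed under reversal if the reversal of every factor of $\mathbf u$ is again a factor of $\mathbf u$. *)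

theory Defs
  imports Main "HOL-Library.Sublist"
begin

definition aperiodic :: "(nat \<Rightarrow> 'a) \<Rightarrow> bool" where
  "aperiodic u \<longleftrightarrow> \<not> (\<exists>p>0. \<exists>n0. \<forall>n\<ge>n0. u (n + p) = u n)"

definition factor_of :: "'a list \<Rightarrow> (nat \<Rightarrow> 'a) \<Rightarrow> bool" where
  "factor_of w u \<longleftrightarrow> (\<exists>i. w = map u [i..<i + length w])"

definition prefix_of :: "'a list \<Rightarrow> (nat \<Rightarrow> 'a) \<Rightarrow> bool" where
  "prefix_of w u \<longleftrightarrow> w = map u [0..<length w]"

definition closed_under_reversal :: "(nat \<Rightarrow> 'a) \<Rightarrow> bool" where
  "closed_under_reversal u \<longleftrightarrow> (\<forall>w. factor_of w u \<longrightarrow> factor_of (rev w) u)"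

definition palindrome :: "'a list \<Rightarrow> bool" where
  "palindrome w \<longleftrightarrow> rev w = w"

definition occurrences :: "'a list \<Rightarrow> 'a list \<Rightarrow> nat set" where
  "occurrences s w = {i. i + length s \<le> length w \<and> take (length s) (drop i w) = s}"

definition longest_pal_suffix :: "'a list \<Rightarrow> 'a list" where
  "longest_pal_suffix w = (THE s. suffix s w \<and> palindrome s \<and>
      (\<forall>t. suffix t w \<and> palindrome t \<longrightarrow> length t \<le> length s))"

end

theory Submission
  imports Defs
begin

lemma suffix_drop_iff: "suffix s x \<longleftrightarrow> length s \<le> length x \<and> s = drop (length x - length s) x"
proof
  assume "suffix s x" then obtain z where "x = z @ s" by (rule suffixE)
  thus "length s \<le> length x \<and> s = drop (length x - length s) x" by simp
next
  assume "length s \<le> length x \<and> s = drop (length x - length s) x"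
  thus "suffix s x" using suffix_drop[of "length x - length s" x] by simp
qed

lemma prefix_take_iff: "prefix s x \<longleftrightarrow> s = take (length s) x"
proof
  assume "prefix s x" then obtain z where "x = s @ z" by (rule prefixE)
  thus "s = take (length s) x" by simp
next
  assume "s = take (length s) x"
  thus "prefix s x" using take_is_prefix[of "length s" x] by simp
qed

lemma occ_nth: "i \<in> occurrences s w \<longleftrightarrow> i + length s \<le> length w \<and> (\<forall>j<length s. w ! (i+j) = s ! j)"
  unfolding occurrences_def by (auto simp: list_eq_iff_nth_eq)

lemma lps_ex: "\<exists>s. suffix s x \<and> palindrome s \<and> (\<forall>t. suffix t x \<and> palindrome t \<longrightarrow> length t \<le> length s)"
proof -
  have "\<forall>y. suffix y x \<and> palindrome y \<longrightarrow> length y < Suc (length x)"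
    by (auto dest: suffix_length_le simp: less_Suc_eq_le)
  moreover have "suffix [] x \<and> palindrome []" by (simp add: palindrome_def)
  ultimately show ?thesis using ex_has_greatest_nat[of "\<lambda>s. suffix s x \<and> palindrome s" "[]" length "Suc (length x)"]
    by blast
qed

lemma suffix_same_len: "suffix s x \<Longrightarrow> suffix t x \<Longrightarrow> length s = length t \<Longrightarrow> s = t"
proof -
  assume a: "suffix s x" "suffix t x" "length s = length t"
  have "s = drop (length x - length s) x" using a(1) unfolding suffix_drop_iff by blast
  moreover have "t = drop (length x - length t) x" using a(2) unfolding suffix_drop_iff by blast
  ultimately show ?thesis using a(3) by simp
qed

lemma lps_props:
  "suffix (longest_pal_suffix x) x" "palindrome (longest_pal_suffix x)"
  "suffix t x \<Longrightarrow> palindrome t \<Longrightarrow> length t \<le> length (longest_pal_suffix x)"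
proof -
  have ex1: "\<exists>!s. suffix s x \<and> palindrome s \<and> (\<forall>t. suffix t x \<and> palindrome t \<longrightarrow> length t \<le> length s)"
  proof -
    obtain s where s: "suffix s x" "palindrome s" "\<forall>t. suffix t x \<and> palindrome t \<longrightarrow> length t \<le> length s"
      using lps_ex by blast
    show ?thesis
    proof (rule ex1I[of _ s])
      show "suffix s x \<and> palindrome s \<and> (\<forall>t. suffix t x \<and> palindrome t \<longrightarrow> length t \<le> length s)"
        using s by blast
      fix y assume y: "suffix y x \<and> palindrome y \<and> (\<forall>t. suffix t x \<and> palindrome t \<longrightarrow> length t \<le> length y)"
      hence "length y = length s" using s by (meson le_antisym)
      thus "y = s" using suffix_same_len y s(1) by blast
    qed
  qed
  note th = theI'[OF ex1, folded longest_pal_suffix_def]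
  show "suffix (longest_pal_suffix x) x" "palindrome (longest_pal_suffix x)"
       "suffix t x \<Longrightarrow> palindrome t \<Longrightarrow> length t \<le> length (longest_pal_suffix x)"
    using th by auto
qed

lemma lps_eqI: "suffix s x \<Longrightarrow> palindrome s \<Longrightarrow> (\<And>t. suffix t x \<Longrightarrow> palindrome t \<Longrightarrow> length t \<le> length s)
  \<Longrightarrow> longest_pal_suffix x = s"
proof -
  assume a: "suffix s x" "palindrome s" "\<And>t. suffix t x \<Longrightarrow> palindrome t \<Longrightarrow> length t \<le> length s"
  have "length (longest_pal_suffix x) \<le> length s" using a(3) lps_props(1,2) by blast
  moreover have "length s \<le> length (longest_pal_suffix x)" using lps_props(3) a(1,2) by blast
  ultimately show ?thesis using suffix_same_len[OF lps_props(1) a(1)] by simp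
qed

lemma occ_suffix: "suffix s w \<Longrightarrow> length w - length s \<in> occurrences s w"
proof -
  assume "suffix s w" then obtain z where "w = z @ s" by (rule suffixE)
  thus ?thesis by (simp add: occurrences_def)
qed

lemma occ_prefix: "prefix s w \<Longrightarrow> 0 \<in> occurrences s w"
  using prefix_length_le[of s w] prefix_take_iff[of s w] by (auto simp: occurrences_def)

lemma occ_drop: "j \<in> occurrences s (drop k w) \<Longrightarrow> k \<le> length w \<Longrightarrow> k + j \<in> occurrences s w"
  unfolding occ_nth by (auto simp: add.assoc)

lemma occ_rev: "i \<in> occurrences s (rev x) \<Longrightarrow> length x - length s - i \<in> occurrences (rev s) x"
  unfolding occ_nth
proof (intro conjI allI impI; elim conjE)
  fix j assume a: "i + length s \<le> length (rev x)" "\<forall>j<length s. rev x ! (i + j) = s ! j" "j < length (rev s)"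
  have "rev x ! (i + (length s - 1 - j)) = s ! (length s - 1 - j)" using a(2)[rule_format, of "length s - 1 - j"] a(3) by simp
  moreover have "rev x ! (i + (length s - 1 - j)) = x ! (length x - length s - i + j)"
    using a by (simp add: rev_nth add.commute)
  moreover have "rev s ! j = s ! (length s - 1 - j)" using a by (simp add: rev_nth)
  ultimately show "x ! (length x - length s - i + j) = rev s ! j" by simp
qed auto

lemma occ_prefix_mono: "prefix e x \<Longrightarrow> i \<in> occurrences s e \<Longrightarrow> i \<in> occurrences s x"
  unfolding occ_nth by (auto simp: prefix_def nth_append)

lemma prefix_rev_pal: "suffix e P \<Longrightarrow> palindrome P \<Longrightarrow> prefix (rev e) P"
proof -
  assume "suffix e P" "palindrome P"
  hence "prefix (rev e) (rev P)" "rev P = P" unfolding palindrome_def suffix_to_prefix by auto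
  thus ?thesis by simp
qed

lemma key:
  assumes len: "length x > length w"
  and b: "b \<in> {w, rev w}" "prefix b x"
  and e: "e \<in> {w, rev w}" "suffix e x"
  and occ: "\<And>s. s \<in> {w, rev w} \<Longrightarrow> occurrences s x \<subseteq> {0, length x - length w}"
  and uni: "card (occurrences (longest_pal_suffix x) x) = 1"
  shows "palindrome x"
proof -
  define P where "P = longest_pal_suffix x"
  have Ps: "suffix P x" and Pp: "palindrome P" unfolding P_def using lps_props by auto
  have Pin: "length x - length P \<in> occurrences P x" using occ_suffix[OF Ps] .
  have single: "\<And>i. i \<in> occurrences P x \<Longrightarrow> i = length x - length P"
    using uni Pin unfolding P_def[symmetric] by (metis card_1_singletonE singletonD)
  have Plen: "length P \<le> length x" using Ps suffix_length_le by blast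
  have le: "length e = length w" "length b = length w" using b e by auto
  show ?thesis
  proof (cases "length P \<ge> length w")
    case True
    have "suffix e P" using suffix_length_suffix[OF e(2) Ps] True le by simp
    hence "prefix (rev e) P" using Pp prefix_rev_pal by blast
    hence "0 \<in> occurrences (rev e) P" by (rule occ_prefix)
    moreover have "P = drop (length x - length P) x" using Ps suffix_drop_iff by blast
    ultimately have "length x - length P \<in> occurrences (rev e) x"
      using occ_drop[of 0 "rev e" "length x - length P" x] by simp
    moreover have "rev e \<in> {w, rev w}" using e by auto
    ultimately have "length x - length P \<in> {0, length x - length w}" using occ by blast
    then show ?thesis
    proof
      assume "length x - length P = 0"
      hence "P = x" using Plen suffix_same_len[OF Ps, of x] by simp
      thus ?thesis using Pp by simp
    next
      assume "length x - length P \<in> {length x - length w}"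
      hence "length P = length w" using Plen len by auto
      hence "P = e" using suffix_same_len[OF Ps e(2)] le by simp
      hence ee: "rev e = e" using Pp palindrome_def by metis
      hence "b = e" using b e by auto
      hence "0 \<in> occurrences P x" using occ_prefix[OF b(2)] \<open>P = e\<close> by simp
      hence "0 = length x - length P" by (rule single)
      thus ?thesis using \<open>length P = length w\<close> len by simp
    qed
  next
    case False
    have "suffix P e" using suffix_length_suffix[OF Ps e(2)] False le by simp
    show ?thesis
    proof (cases "b = e")
      case True
      have "length e - length P \<in> occurrences P e" using occ_suffix[OF \<open>suffix P e\<close>] .
      hence "length e - length P \<in> occurrences P x" using occ_prefix_mono b(2) True by blast
      hence "length e - length P = length x - length P" by (rule single)
      thus ?thesis using le len False by simp
    next
      case bf: False
      hence "b = rev e" using b e by auto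
      have "prefix (rev P) (rev e)" using \<open>suffix P e\<close> suffix_to_prefix by blast
      hence "prefix P x" using Pp b(2) \<open>b = rev e\<close> unfolding palindrome_def by (metis prefix_order.trans)
      hence "0 = length x - length P" using occ_prefix single by blast
      thus ?thesis using False len by simp
    qed
  qed
qed

lemma dir1:
  assumes H: "\<forall>w. prefix_of w u \<and> length w \<ge> H \<longrightarrow> card (occurrences (longest_pal_suffix w) w) = 1"
  and fv: "factor_of v u" and lv: "length v > length w" and lw: "length w \<ge> H"
  and pv: "prefix w v \<or> prefix (rev w) v" and sv: "suffix w v \<or> suffix (rev w) v"
  and ov: "occurrences w v \<union> occurrences (rev w) v \<subseteq> {0, length v - length w}"
  shows "palindrome v"
proof -
  obtain b where b: "b \<in> {w, rev w}" "prefix b v" using pv by auto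
  obtain e where e: "e \<in> {w, rev w}" "suffix e v" using sv by auto
  have occv: "\<And>s. s \<in> {w, rev w} \<Longrightarrow> occurrences s v \<subseteq> {0, length v - length w}" using ov by auto
  have kv: "palindrome x" if x: "x \<in> {v, rev v}" and c: "card (occurrences (longest_pal_suffix x) x) = 1" for x
  proof (cases "x = v")
    case True
    then show ?thesis using key[OF lv b e occv] c by simp
  next
    case False
    hence xr: "x = rev v" using x by auto
    have b': "rev e \<in> {w, rev w}" "prefix (rev e) (rev v)" using e(1) apply auto[1]
      using e(2) by (simp add: suffix_to_prefix)
    have e': "rev b \<in> {w, rev w}" "suffix (rev b) (rev v)" using b(1) apply auto[1]
      using b(2) by (simp add: suffix_to_prefix)
    have occ': "occurrences s (rev v) \<subseteq> {0, length (rev v) - length w}" if s: "s \<in> {w, rev w}" for s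
    proof
      fix i assume i: "i \<in> occurrences s (rev v)"
      hence A: "length v - length s - i \<in> occurrences (rev s) v" by (rule occ_rev)
      have B: "rev s \<in> {w, rev w}" using s by auto
      have "length v - length s - i \<in> {0, length v - length w}" using subsetD[OF occv[OF B] A] .
      moreover have "i + length s \<le> length v" using i unfolding occurrences_def by simp
      moreover have "length s = length w" using s by auto
      ultimately show "i \<in> {0, length (rev v) - length w}" by auto
    qed
    have "palindrome (rev v)" using key[of w "rev v", OF _ b' e' occ'] lv c xr by simp
    thus ?thesis using xr by simp
  qed
  have main: "\<forall>x. x \<in> {v, rev v} \<longrightarrow> x = map u [i..<i+length v] \<longrightarrow> palindrome v" for i
  proof (induction i rule: less_induct)
    case (less i)
    show ?case
    proof (intro allI impI)
      fix x assume x: "x \<in> {v, rev v}" and xi: "x = map u [i..<i+length v]"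
      have lx: "length x = length v" using x by auto
      define p where "p = map u [0..<i+length v]"
      have pp: "prefix_of p u" unfolding p_def prefix_of_def by simp
      have lp: "length p = i + length v" unfolding p_def by simp
      have "H \<le> length p" using lp lv lw by simp
      hence "card (occurrences (longest_pal_suffix p) p) = 1" using H pp by blast
      define Q where "Q = longest_pal_suffix p"
      have Qs: "suffix Q p" and Qp: "palindrome Q" unfolding Q_def using lps_props by auto
      have Qin: "length p - length Q \<in> occurrences Q p" using occ_suffix[OF Qs] .
      have single: "\<And>j. j \<in> occurrences Q p \<Longrightarrow> j = length p - length Q"
        using \<open>card _ = 1\<close> Qin unfolding Q_def[symmetric] by (metis card_1_singletonE singletonD)
      have pdec: "p = map u [0..<i] @ x" unfolding p_def xi by (simp add: upt_add_eq_append[of 0 i])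
      hence xs: "suffix x p" by (simp add: suffixI)
      have xd: "x = drop i p" using pdec by (simp add: lp)
      show "palindrome v"
      proof (cases "length Q \<le> length x")
        case True
        have "suffix Q x" using suffix_length_suffix[OF Qs xs True] .
        have lpsx: "longest_pal_suffix x = Q"
        proof (rule lps_eqI[OF \<open>suffix Q x\<close> Qp])
          fix t assume "suffix t x" "palindrome t"
          have "suffix t p" using \<open>suffix t x\<close> xs by (rule suffix_order.trans)
          thus "length t \<le> length Q" unfolding Q_def using lps_props(3) \<open>palindrome t\<close> by blast
        qed
        have "occurrences Q x = {length x - length Q}"
        proof
          show "{length x - length Q} \<subseteq> occurrences Q x" using occ_suffix[OF \<open>suffix Q x\<close>] by simp
          show "occurrences Q x \<subseteq> {length x - length Q}"
          proof
            fix j assume "j \<in> occurrences Q x"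
            hence "j \<in> occurrences Q (drop i p)" using xd by simp
            hence "i + j \<in> occurrences Q p" using lp by (intro occ_drop) simp_all
            hence "i + j = length p - length Q" by (rule single)
            thus "j \<in> {length x - length Q}" using lp lx by simp
          qed
        qed
        hence "palindrome x" using kv[OF x] lpsx by simp
        thus ?thesis using x unfolding palindrome_def by auto
      next
        case False
        have "suffix x Q" using suffix_length_suffix[OF xs Qs] False by simp
        hence pr: "prefix (rev x) Q" using Qp prefix_rev_pal by blast
        define i' where "i' = i + length v - length Q"
        have lQ: "length Q \<le> length p" using Qs suffix_length_le by blast
        have "length Q \<le> length p \<and> Q = drop (length p - length Q) p" using Qs unfolding suffix_drop_iff .
        hence Qd: "drop (length p - length Q) p = Q" by (elim conjE) (rule sym)
        have "drop (length p - length Q) p = map u [i'..<i+length v]" unfolding i'_def lp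
          unfolding p_def by (simp add: drop_map)
        hence Qm: "Q = map u [i'..<i+length v]" using Qd by simp
        have "rev x = take (length (rev x)) Q" using pr unfolding prefix_take_iff .
        hence "rev x = take (length v) Q" using lx by simp
        also have "\<dots> = map u [i'..<i'+length v]" unfolding Qm using False lx lQ lp
          by (simp add: take_map i'_def take_upt)
        finally have rx: "rev x = map u [i'..<i'+length v]" .
        have "i' < i" unfolding i'_def using False lx lQ lp by simp
        moreover have "rev x \<in> {v, rev v}" using x by auto
        ultimately show ?thesis using less rx by blast
      qed
    qed
  qed
  obtain i0 where "v = map u [i0..<i0 + length v]" using fv factor_of_def by metis
  thus ?thesis using main[of i0] by blast
qed

lemma prefix_of_drop: "prefix_of p u \<Longrightarrow> factor_of (drop k p) u"
  unfolding prefix_of_def factor_of_def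
proof -
  assume p: "p = map u [0..<length p]"
  show "\<exists>i. drop k p = map u [i..<i + length (drop k p)]"
  proof (rule exI[of _ k], cases "k \<le> length p")
    case True
    have "drop k p = map u [k..<length p]" by (subst p) (simp add: drop_map)
    thus "drop k p = map u [k..<k + length (drop k p)]" using True by simp
  next
    case False
    thus "drop k p = map u [k..<k + length (drop k p)]" by simp
  qed
qed

lemma lemA:
  assumes R: "\<forall>w v. factor_of w u \<and> length w \<ge> N \<and> factor_of v u \<and> length v > length w
             \<and> (prefix w v \<or> prefix (rev w) v) \<and> (suffix w v \<or> suffix (rev w) v)
             \<and> occurrences w v \<union> occurrences (rev w) v \<subseteq> {0, length v - length w}
             \<longrightarrow> palindrome v"
  and pp: "prefix_of p u" and ws: "suffix w p" and lw: "length w \<ge> N"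
  and j: "j \<in> occurrences w p" "j < length p - length w"
  shows "\<exists>v. suffix v p \<and> palindrome v \<and> length v > length w"
proof -
  define S where "S = {i. i < length p - length w \<and> (i \<in> occurrences w p \<or> i \<in> occurrences (rev w) p)}"
  have fS: "finite S" unfolding S_def by (rule finite_subset[of _ "{..<length p - length w}"]) auto
  have "j \<in> S" unfolding S_def using j by auto
  define k where "k = Max S"
  have kS: "k \<in> S" unfolding k_def using fS \<open>j \<in> S\<close> Max_in by blast
  have kmax: "\<And>i. i \<in> S \<Longrightarrow> i \<le> k" unfolding k_def using fS Max_ge by blast
  define v where "v = drop k p"
  have lv: "length v = length p - k" unfolding v_def by simp
  have klt: "k < length p - length w" using kS S_def by auto
  have lvw: "length v > length w" using lv klt by simp
  have fv: "factor_of v u" unfolding v_def using prefix_of_drop[OF pp] .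
  have "w = drop (length p - length w) p" using ws suffix_drop_iff by blast
  hence fw: "factor_of w u" using prefix_of_drop[OF pp] by metis
  have pre: "prefix w v \<or> prefix (rev w) v"
  proof -
    have "k \<in> occurrences w p \<or> k \<in> occurrences (rev w) p" using kS S_def by auto
    thus ?thesis
    proof
      assume "k \<in> occurrences w p"
      hence "w = take (length w) v" unfolding occurrences_def v_def by simp
      thus ?thesis unfolding prefix_take_iff[of w v] by blast
    next
      assume "k \<in> occurrences (rev w) p"
      hence "rev w = take (length (rev w)) v" unfolding occurrences_def v_def by simp
      thus ?thesis unfolding prefix_take_iff[of "rev w" v] by blast
    qed
  qed
  have "suffix v p" unfolding v_def by (rule suffix_drop)
  hence suf: "suffix w v" using suffix_length_suffix[OF ws] lvw by simp
  have occ: "occurrences w v \<union> occurrences (rev w) v \<subseteq> {0, length v - length w}"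
  proof
    fix i assume "i \<in> occurrences w v \<union> occurrences (rev w) v"
    then obtain s where s: "s \<in> {w, rev w}" "i \<in> occurrences s v" by auto
    have kle: "k \<le> length p" using klt by simp
    have ki: "k + i \<in> occurrences s p" using s(2) kle unfolding v_def by (rule occ_drop)
    have ils: "i + length w \<le> length v" using s unfolding occurrences_def by auto
    show "i \<in> {0, length v - length w}"
    proof (cases "k + i < length p - length w")
      case True
      hence "k + i \<in> S" unfolding S_def using s ki by auto
      hence "k + i \<le> k" by (rule kmax)
      thus ?thesis by simp
    next
      case False
      thus ?thesis using ils lv klt by auto
    qed
  qed
  have "palindrome v" using R[rule_format, of w v] fw lw fv lvw pre suf occ by blast
  thus ?thesis using \<open>suffix v p\<close> lvw by blast
qed

lemma dir2:
  assumes fin: "finite (range u)"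
  and R: "\<forall>w v. factor_of w u \<and> length w \<ge> N \<and> factor_of v u \<and> length v > length w
             \<and> (prefix w v \<or> prefix (rev w) v) \<and> (suffix w v \<or> suffix (rev w) v)
             \<and> occurrences w v \<union> occurrences (rev w) v \<subseteq> {0, length v - length w}
             \<longrightarrow> palindrome v"
  shows "\<exists>H::nat. \<forall>w. prefix_of w u \<and> length w \<ge> H \<longrightarrow>
             card (occurrences (longest_pal_suffix w) w) = 1"
proof -
  define F where "F = range (\<lambda>i. map u [i..<i+N])"
  have "F \<subseteq> {xs. set xs \<subseteq> range u \<and> length xs = N}" unfolding F_def by auto
  hence fF: "finite F" using finite_lists_length_eq[OF fin] finite_subset by blast
  define g where "g i = (LEAST j. map u [j..<j+N] = map u [i..<i+N])" for i
  have "range g \<subseteq> (\<lambda>x. LEAST j. map u [j..<j+N] = x) ` F" unfolding g_def F_def by auto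
  hence fg: "finite (range g)" using fF finite_subset by blast
  define M where "M = Max (range g)"
  have gM: "g i \<le> M" for i unfolding M_def using fg by simp
  have gw: "map u [g i..<g i+N] = map u [i..<i+N]" for i
    unfolding g_def by (rule LeastI[of _ i]) simp
  show ?thesis
  proof (rule exI[of _ "M + N + 1"], intro allI impI, elim conjE)
    fix p assume pp: "prefix_of p u" and lp: "M + N + 1 \<le> length p"
    define n where "n = length p"
    have pm: "p = map u [0..<n]" using pp unfolding prefix_of_def n_def by simp
    define Q where "Q = longest_pal_suffix p"
    have Qs: "suffix Q p" and Qp: "palindrome Q" unfolding Q_def using lps_props by auto
    have Qmax: "\<And>t. suffix t p \<Longrightarrow> palindrome t \<Longrightarrow> length t \<le> length Q" unfolding Q_def using lps_props by auto
    define w where "w = drop (n - N) p"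
    have ws: "suffix w p" unfolding w_def by (rule suffix_drop)
    have lw: "length w = N" unfolding w_def n_def using lp by simp
    have wm: "w = map u [n-N..<n-N+N]" unfolding w_def pm using lp n_def by (simp add: drop_map)
    define g0 where "g0 = g (n - N)"
    have g0w: "map u [g0..<g0+N] = w" unfolding g0_def wm by (rule gw)
    have g0lt: "g0 < n - N" using gM[of "n-N"] lp n_def g0_def by simp
    have "g0 \<in> occurrences w p" unfolding occ_nth
    proof (intro conjI allI impI)
      show "g0 + length w \<le> length p" using g0lt lw n_def by simp
      fix j assume "j < length w"
      thus "p ! (g0 + j) = w ! j" unfolding pm g0w[symmetric] using g0lt lw by simp
    qed
    then obtain v where "suffix v p" "palindrome v" "length v > length w"
      using lemA[OF R pp ws] lw g0lt n_def by auto
    hence QN: "length Q > N" using Qmax lw by fastforce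
    have "occurrences Q p = {n - length Q}"
    proof
      show "{n - length Q} \<subseteq> occurrences Q p" using occ_suffix[OF Qs] n_def by simp
      show "occurrences Q p \<subseteq> {n - length Q}"
      proof
        fix j assume j: "j \<in> occurrences Q p"
        show "j \<in> {n - length Q}"
        proof (rule ccontr)
          assume "j \<notin> {n - length Q}"
          hence "j < length p - length Q" using j unfolding occurrences_def n_def by auto
          then obtain v where "suffix v p" "palindrome v" "length v > length Q"
            using lemA[OF R pp Qs _ j] QN by auto
          thus False using Qmax by fastforce
        qed
      qed
    qed
    thus "card (occurrences (longest_pal_suffix p) p) = 1" unfolding Q_def by simp
  qed
qed

theorem lemma14:
  fixes u :: "nat \<Rightarrow> 'a"
  assumes "finite (range u)"
    and "aperiodic u"
    and "closed_under_reversal u"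
  shows "(\<exists>H::nat. \<forall>w. prefix_of w u \<and> length w \<ge> H \<longrightarrow>
             card (occurrences (longest_pal_suffix w) w) = 1)
     \<longleftrightarrow>
         (\<exists>N::nat. \<forall>w v. factor_of w u \<and> length w \<ge> N \<and> factor_of v u \<and> length v > length w
             \<and> (prefix w v \<or> prefix (rev w) v) \<and> (suffix w v \<or> suffix (rev w) v)
             \<and> occurrences w v \<union> occurrences (rev w) v \<subseteq> {0, length v - length w}
             \<longrightarrow> palindrome v)"
proof
  assume "\<exists>H::nat. \<forall>w. prefix_of w u \<and> length w \<ge> H \<longrightarrow>
             card (occurrences (longest_pal_suffix w) w) = 1"
  then obtain H where H: "\<forall>w. prefix_of w u \<and> length w \<ge> H \<longrightarrow>
             card (occurrences (longest_pal_suffix w) w) = 1" by blast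
  show "\<exists>N::nat. \<forall>w v. factor_of w u \<and> length w \<ge> N \<and> factor_of v u \<and> length v > length w
             \<and> (prefix w v \<or> prefix (rev w) v) \<and> (suffix w v \<or> suffix (rev w) v)
             \<and> occurrences w v \<union> occurrences (rev w) v \<subseteq> {0, length v - length w}
             \<longrightarrow> palindrome v"
    by (rule exI[of _ H]) (blast intro: dir1[OF H])
next
  assume "\<exists>N::nat. \<forall>w v. factor_of w u \<and> length w \<ge> N \<and> factor_of v u \<and> length v > length w
             \<and> (prefix w v \<or> prefix (rev w) v) \<and> (suffix w v \<or> suffix (rev w) v)
             \<and> occurrences w v \<union> occurrences (rev w) v \<subseteq> {0, length v - length w}
             \<longrightarrow> palindrome v"
  then obtain N where R: "\<forall>w v. factor_of w u \<and> length w \<ge> N \<and> factor_of v u \<and> length v > length w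
             \<and> (prefix w v \<or> prefix (rev w) v) \<and> (suffix w v \<or> suffix (rev w) v)
             \<and> occurrences w v \<union> occurrences (rev w) v \<subseteq> {0, length v - length w}
             \<longrightarrow> palindrome v" by blast
  show "\<exists>H::nat. \<forall>w. prefix_of w u \<and> length w \<ge> H \<longrightarrow>
             card (occurrences (longest_pal_suffix w) w) = 1"
    using dir2[OF assms(1) R] .
qed

end
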